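(* Let $D\ge 1$ and $p\ge 1$ be integers, let $h>0$, let $Q\subset\mathbb{R}^D$ be a finite set of query points, let $c_Q\in\mathbb{R}^D$, and let $R\subset\mathbb{R}^D$ be a finite set of reference points. For each multi-index $\beta$ with $\beta<p$, define the local moment $$L_\beta=\sum_{r\in R}\frac{(-1)^{|\beta|}}{\beta!}\,h_\beta\!\left(\frac{c_Q-r}{\sqrt{2h^2}}\right),$$ and for $q\in\mathbb{R}^D$ define $$\widetilde G(q)=\sum_{\beta<p}L_\beta\left(\frac{q-c_Q}{\sqrt{2h^2}}\right)^{\beta},\qquad G(q)=\sum_{r\in R}e^{-\|q-r\|^2/(2h^2)}.$$ Suppose there is $r_0$ with $0\le r_0<1$ such that $\|q-c_Q\|_\infty<r_0h$ for every $q\in Q$. Then for every $q\in Q$, $$\bigl|\widetilde G(q)-G(q)\bigr|\le\frac{|R|}{(1-r_0)^D}\sum_{k=0}^{D-1}\binom{D}{k}(1-r_0^p)^k\left(\frac{r_0^p}{\sqrt{p!}}\right)^{D-k}.$$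
   Context: Hermite polynomials: $H_n(t)=(-1)^n e^{t^2}\frac{d^n}{dt^n}e^{-t^2}$ for $t\in\mathbb{R}$; Hermite functions: $h_n(t)=e^{-t^2}H_n(t)$. For a $D$-dimensional multi-index $\alpha=(\alpha[1],\dots,\alpha[D])$ of non-negative integers and $t\in\mathbb{R}^D$: $h_\alpha(t)=\prod_{d=1}^D h_{\alpha[d]}(t[d])$, $|\alpha|=\sum_d\alpha[d]$, $\alpha!=\prod_d\alpha[d]!$, $t^\alpha=\prod_d t[d]^{\alpha[d]}$. For an integer $p$, "$\alpha<p$" means $\alpha[d]<p$ for every $d=1,\dots,D$ (so the sum over $\beta<p$ has $p^D$ terms). $\|\cdot\|$ is the Euclidean norm and $\|\cdot\|_\infty$ the max norm; $|R|$ is the number of points in $R$. *)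

theory Defs
  imports "HOL-Analysis.Analysis"
begin

definition hermite_poly :: "nat \<Rightarrow> real \<Rightarrow> real" where
  "hermite_poly n t = (-1) ^ n * exp (t\<^sup>2) * ((deriv ^^ n) (\<lambda>s. exp (- s\<^sup>2)) t)"

definition hermite_fun :: "nat \<Rightarrow> real \<Rightarrow> real" where
  "hermite_fun n t = exp (- t\<^sup>2) * hermite_poly n t"

definition mhermite :: "('n::finite \<Rightarrow> nat) \<Rightarrow> real^'n \<Rightarrow> real" where
  "mhermite \<alpha> t = (\<Prod>d\<in>UNIV. hermite_fun (\<alpha> d) (t $ d))"

definition mabs :: "('n::finite \<Rightarrow> nat) \<Rightarrow> nat" where
  "mabs \<alpha> = (\<Sum>d\<in>UNIV. \<alpha> d)"

definition mfact :: "('n::finite \<Rightarrow> nat) \<Rightarrow> nat" where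
  "mfact \<alpha> = (\<Prod>d\<in>UNIV. fact (\<alpha> d))"

definition mpow :: "real^'n::finite \<Rightarrow> ('n \<Rightarrow> nat) \<Rightarrow> real" where
  "mpow t \<alpha> = (\<Prod>d\<in>UNIV. (t $ d) ^ (\<alpha> d))"

definition mindices_below :: "nat \<Rightarrow> ('n::finite \<Rightarrow> nat) set" where
  "mindices_below p = {\<beta>. \<forall>d. \<beta> d < p}"

definition local_moment :: "real \<Rightarrow> real^'n::finite \<Rightarrow> (real^'n) set \<Rightarrow> ('n \<Rightarrow> nat) \<Rightarrow> real" where
  "local_moment h cQ R \<beta> =
     (\<Sum>r\<in>R. (-1) ^ mabs \<beta> / real (mfact \<beta>) * mhermite \<beta> ((1 / sqrt (2 * h\<^sup>2)) *\<^sub>R (cQ - r)))"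

definition G_approx :: "nat \<Rightarrow> real \<Rightarrow> real^'n::finite \<Rightarrow> (real^'n) set \<Rightarrow> real^'n \<Rightarrow> real" where
  "G_approx p h cQ R q =
     (\<Sum>\<beta>\<in>mindices_below p. local_moment h cQ R \<beta> * mpow ((1 / sqrt (2 * h\<^sup>2)) *\<^sub>R (q - cQ)) \<beta>)"

definition G_exact :: "real \<Rightarrow> (real^'n::finite) set \<Rightarrow> real^'n \<Rightarrow> real" where
  "G_exact h R q = (\<Sum>r\<in>R. exp (- (norm (q - r))\<^sup>2 / (2 * h\<^sup>2)))"

end

theory Submission
  imports Defs
begin


fun gg :: "nat \<Rightarrow> real \<Rightarrow> real" where
  "gg 0 x = exp (- x\<^sup>2)"
| "gg (Suc 0) x = -2 * x * exp (- x\<^sup>2)"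
| "gg (Suc (Suc n)) x = -2 * x * gg (Suc n) x - 2 * real (Suc n) * gg n x"

lemma gg_deriv: "(gg n has_real_derivative gg (Suc n) x) (at x)"
proof (induction n arbitrary: x rule: less_induct)
  case (less n)
  show ?case
  proof (cases n)
    case 0
    have "((\<lambda>x. exp (- x\<^sup>2)) has_real_derivative exp (- x\<^sup>2) * (- (2 * x))) (at x)"
      by (auto intro!: derivative_eq_intros)
    moreover have "gg 0 = (\<lambda>x. exp (- x\<^sup>2))" by (rule ext) simp
    ultimately show ?thesis using 0 by (simp add: algebra_simps)
  next
    case (Suc m)
    show ?thesis
    proof (cases m)
      case 0
      have "((\<lambda>x. -2 * x * exp (- x\<^sup>2)) has_real_derivative
          (-2 * exp (- x\<^sup>2) + (-2 * x) * (exp (- x\<^sup>2) * (- (2 * x))))) (at x)"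
        by (auto intro!: derivative_eq_intros)
      moreover have "gg (Suc 0) = (\<lambda>x. -2 * x * exp (- x\<^sup>2))" by (rule ext) simp
      ultimately show ?thesis using Suc 0 by (simp add: algebra_simps power2_eq_square)
    next
      case (Suc k)
      have 1: "(gg (Suc k) has_real_derivative gg (Suc (Suc k)) x) (at x)"
        using less.IH[of "Suc k" x] \<open>n = Suc m\<close> Suc by simp
      have 2: "(gg k has_real_derivative gg (Suc k) x) (at x)"
        using less \<open>n = Suc m\<close> Suc by auto
      have e: "gg (Suc (Suc k)) = (\<lambda>y. -2 * y * gg (Suc k) y - 2 * real (Suc k) * gg k y)"
        by (rule ext) simp
      have d1: "((\<lambda>y. -2 * y) has_real_derivative -2) (at x)"
        by (auto intro!: derivative_eq_intros)
      note D = DERIV_diff[OF DERIV_mult'[OF d1 1] DERIV_cmult[OF 2, of "2 * real (Suc k)"]]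
      show ?thesis unfolding \<open>n = Suc m\<close> Suc e
        by (rule DERIV_cong[OF D]) (simp add: algebra_simps)
    qed
  qed
qed

lemma gg_funpow: "(deriv ^^ n) (gg 0) = gg n"
proof (induction n)
  case 0 then show ?case by simp
next
  case (Suc n)
  have "(deriv ^^ Suc n) (gg 0) = deriv (gg n)" by (simp only: funpow.simps o_apply Suc.IH)
  also have "\<dots> = gg (Suc n)" by (intro ext DERIV_imp_deriv gg_deriv)
  finally show ?case .
qed

lemma gg_rec: "gg (Suc (Suc n)) x = -2 * x * gg (Suc n) x - 2 * real (Suc n) * gg n x"
  by simp

lemma gg0_prod: "gg n 0 * gg (Suc n) 0 = 0"
  by (induction n) (auto simp: gg_rec)

lemma gg0_bound: "(gg n 0)\<^sup>2 \<le> 2 ^ n * fact n"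
proof (induction n rule: less_induct)
  case (less n)
  show ?case
  proof (cases n)
    case 0 then show ?thesis by simp
  next
    case (Suc m) show ?thesis
    proof (cases m)
      case 0 then show ?thesis using Suc by simp
    next
      case (Suc k)
      have ih: "(gg k 0)\<^sup>2 \<le> 2 ^ k * fact k" using less \<open>n = Suc m\<close> Suc by auto
      have "(gg n 0)\<^sup>2 = 4 * (real (Suc k))\<^sup>2 * (gg k 0)\<^sup>2"
        using \<open>n = Suc m\<close> Suc by (simp add: power2_eq_square algebra_simps)
      also have "\<dots> \<le> 4 * (real (Suc k))\<^sup>2 * (2 ^ k * fact k)"
        using ih by (intro mult_left_mono) auto
      also have "\<dots> \<le> 2 ^ n * fact n"
        using \<open>n = Suc m\<close> Suc by (simp add: power2_eq_square algebra_simps)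
      finally show ?thesis .
    qed
  qed
qed

lemma gg_S_deriv:
  fixes n :: nat and y :: real
  defines "S \<equiv> \<lambda>y. (gg n y)\<^sup>2 + (gg (Suc n) y)\<^sup>2 / (2 * real n + 2)"
  shows "(S has_real_derivative (- 4 * y * (gg (Suc n) y)\<^sup>2 / (2 * real n + 2))) (at y)"
proof -
  have a: "((\<lambda>y. (gg m y)\<^sup>2) has_real_derivative 2 * gg m y * gg (Suc m) y) (at y)" for m
    by (rule DERIV_cong[OF DERIV_power[OF gg_deriv[of m y], of 2]]) (simp add: power2_eq_square)
  have D: "(S has_real_derivative (2 * gg n y * gg (Suc n) y
      + 2 * gg (Suc n) y * gg (Suc (Suc n)) y / (2 * real n + 2))) (at y)"
    unfolding S_def by (intro DERIV_add DERIV_cdivide a)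
  have N: "2 * real n + 2 \<noteq> 0" by (simp add: add_nonneg_pos)
  have e: "gg (Suc (Suc n)) y = -2 * y * gg (Suc n) y - (2 * real n + 2) * gg n y" by simp
  show ?thesis
    by (rule DERIV_cong[OF D]) (simp only: e, use N in \<open>simp add: field_simps power2_eq_square\<close>)
qed

lemma gg_bound: "(gg n x)\<^sup>2 \<le> 2 ^ n * fact n"
proof -
  define S where "S \<equiv> \<lambda>y. (gg n y)\<^sup>2 + (gg (Suc n) y)\<^sup>2 / (2 * real n + 2)"
  have SD: "\<And>y. (S has_real_derivative (- 4 * y * (gg (Suc n) y)\<^sup>2 / (2 * real n + 2))) (at y)"
    unfolding S_def by (rule gg_S_deriv)
  have "S x \<le> S 0"
  proof (cases "x \<ge> 0")
    case True
    show ?thesis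
      by (rule DERIV_nonpos_imp_nonincreasing[of 0 x S, OF True]) (use SD in \<open>auto intro!: exI divide_nonpos_pos mult_nonpos_nonneg\<close>)
  next
    case False
    show ?thesis
    proof (rule DERIV_nonneg_imp_nondecreasing[of x 0 S])
      fix z :: real assume "x \<le> z" "z \<le> 0"
      then have "0 \<le> - 4 * z * (gg (Suc n) z)\<^sup>2 / (2 * real n + 2)"
        by (intro divide_nonneg_pos mult_nonneg_nonneg mult_nonpos_nonpos) auto
      then show "\<exists>y. (S has_real_derivative y) (at z) \<and> 0 \<le> y" using SD[of z] by blast
    qed (use False in auto)
  qed
  moreover have "S 0 \<le> 2 ^ n * fact n"
  proof (cases "gg n 0 = 0")
    case True
    have "(gg (Suc n) 0)\<^sup>2 \<le> 2 ^ Suc n * fact (Suc n)" by (rule gg0_bound)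
    then have "(gg (Suc n) 0)\<^sup>2 / (2 * real n + 2) \<le> 2 ^ Suc n * fact (Suc n) / (2 * real n + 2)"
      by (intro divide_right_mono) auto
    also have "\<dots> = 2 ^ n * fact n" by (simp add: field_simps)
    finally show ?thesis using True unfolding S_def by simp
  next
    case False
    then have "gg (Suc n) 0 = 0" using gg0_prod[of n] by simp
    then show ?thesis using gg0_bound[of n] unfolding S_def by simp
  qed
  moreover have "(gg n x)\<^sup>2 \<le> S x" unfolding S_def by auto
  ultimately show ?thesis by linarith
qed



lemma hermite_fun_gg: "hermite_fun n t = (-1) ^ n * gg n t"
proof -
  have "(\<lambda>s::real. exp (- s\<^sup>2)) = gg 0" by (rule ext) simp
  then have "hermite_poly n t = (-1) ^ n * exp (t\<^sup>2) * gg n t"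
    unfolding hermite_poly_def by (simp only: \<open>(\<lambda>s::real. exp (- s\<^sup>2)) = gg 0\<close> gg_funpow)
  then show ?thesis unfolding hermite_fun_def
    by (simp add: exp_minus field_simps)
qed

lemma coef_sq_bound:
  assumes "2 * s\<^sup>2 \<le> r0\<^sup>2"
  shows "(gg n t * s ^ n / fact n)\<^sup>2 \<le> (r0 ^ n)\<^sup>2 / fact n"
proof -
  have "(gg n t * s ^ n / fact n)\<^sup>2 = (gg n t)\<^sup>2 * (s\<^sup>2) ^ n / (fact n)\<^sup>2"
    by (simp add: power_mult_distrib power_divide power_mult[symmetric] mult.commute)
  also have "\<dots> \<le> (2 ^ n * fact n) * (s\<^sup>2) ^ n / (fact n)\<^sup>2"
    by (intro divide_right_mono mult_right_mono gg_bound) auto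
  also have "\<dots> = (2 * s\<^sup>2) ^ n / fact n"
    by (simp add: power2_eq_square power_mult_distrib)
  also have "\<dots> \<le> (r0\<^sup>2) ^ n / fact n"
    by (intro divide_right_mono power_mono assms) auto
  also have "\<dots> = (r0 ^ n)\<^sup>2 / fact n"
    by (simp add: power_mult[symmetric] mult.commute)
  finally show ?thesis .
qed

lemma coef_bound1:
  assumes "2 * s\<^sup>2 \<le> r0\<^sup>2" "0 \<le> r0"
  shows "\<bar>gg n t * s ^ n / fact n\<bar> \<le> r0 ^ n"
proof -
  have "(gg n t * s ^ n / fact n)\<^sup>2 \<le> (r0 ^ n)\<^sup>2 / fact n" by (rule coef_sq_bound[OF assms(1)])
  also have "\<dots> \<le> (r0 ^ n)\<^sup>2 / 1"
    by (rule divide_left_mono) (auto simp: fact_ge_1)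
  finally have "(gg n t * s ^ n / fact n)\<^sup>2 \<le> (r0 ^ n)\<^sup>2" by simp
  then have "\<bar>gg n t * s ^ n / fact n\<bar> \<le> \<bar>r0 ^ n\<bar>" by (simp only: abs_le_square_iff)
  then show ?thesis using assms(2) by simp
qed

lemma coef_bound2:
  assumes "2 * s\<^sup>2 \<le> r0\<^sup>2" "0 \<le> r0"
  shows "\<bar>gg n t * s ^ n / fact n\<bar> \<le> r0 ^ n / sqrt (fact n)"
proof -
  have "(gg n t * s ^ n / fact n)\<^sup>2 \<le> (r0 ^ n)\<^sup>2 / fact n" by (rule coef_sq_bound[OF assms(1)])
  also have "\<dots> = (r0 ^ n / sqrt (fact n))\<^sup>2"
    by (simp add: power_divide)
  finally have "\<bar>gg n t * s ^ n / fact n\<bar> \<le> \<bar>r0 ^ n / sqrt (fact n)\<bar>" by (simp only: abs_le_square_iff)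
  then show ?thesis using assms(2) by simp
qed

lemma taylor_gg:
  "\<exists>\<xi>. exp (- (t + s)\<^sup>2) = (\<Sum>m<p. gg m t / fact m * s ^ m) + gg p (t + \<xi>) / fact p * s ^ p"
proof -
  have d0: "(\<lambda>u. gg 0 (t + u)) = (\<lambda>u. exp (- (t + u)\<^sup>2))" by (rule ext) simp
  have dd: "\<forall>m x. ((\<lambda>u. gg m (t + u)) has_real_derivative gg (Suc m) (t + x)) (at x)"
  proof (intro allI)
    fix m x
    have "((\<lambda>u. t + u) has_real_derivative 1) (at x)" by (auto intro!: derivative_eq_intros)
    from DERIV_chain2[OF gg_deriv this] show "((\<lambda>u. gg m (t + u)) has_real_derivative gg (Suc m) (t + x)) (at x)"
      by simp
  qed
  from Maclaurin_all_le[OF d0 dd, of s p] show ?thesis by auto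
qed

lemma coord_bounds:
  fixes t s r0 :: real and p :: nat
  assumes "2 * s\<^sup>2 \<le> r0\<^sup>2" "0 \<le> r0"
  shows "\<bar>\<Sum>n<p. gg n t * s ^ n / fact n\<bar> \<le> (\<Sum>n<p. r0 ^ n)"
    and "\<bar>exp (- (t + s)\<^sup>2) - (\<Sum>n<p. gg n t * s ^ n / fact n)\<bar> \<le> r0 ^ p / sqrt (fact p)"
proof -
  show "\<bar>\<Sum>n<p. gg n t * s ^ n / fact n\<bar> \<le> (\<Sum>n<p. r0 ^ n)"
    by (rule order_trans[OF sum_abs sum_mono]) (rule coef_bound1[OF assms])
  obtain \<xi> where xi: "exp (- (t + s)\<^sup>2) = (\<Sum>m<p. gg m t / fact m * s ^ m) + gg p (t + \<xi>) / fact p * s ^ p"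
    using taylor_gg by blast
  have "(\<Sum>m<p. gg m t / fact m * s ^ m) = (\<Sum>n<p. gg n t * s ^ n / fact n)"
    by (simp add: field_simps)
  then have "exp (- (t + s)\<^sup>2) - (\<Sum>n<p. gg n t * s ^ n / fact n) = gg p (t + \<xi>) * s ^ p / fact p"
    using xi by simp
  then show "\<bar>exp (- (t + s)\<^sup>2) - (\<Sum>n<p. gg n t * s ^ n / fact n)\<bar> \<le> r0 ^ p / sqrt (fact p)"
    using coef_bound2[OF assms] by simp
qed

lemma prod_diff_alg: "(x + y) * P - x * P' = (x + y) * (P - P') + y * (P'::real)"
  by (simp add: algebra_simps)

lemma prod_diff_alg2: "(a + b) * ((a + b) ^ m - a ^ m) + b * a ^ m = (a + b) ^ Suc m - (a::real) ^ Suc m"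
  by (simp add: algebra_simps)

lemma prod_diff_bound:
  fixes A B :: "'i \<Rightarrow> real"
  assumes "finite I" "\<And>i. i \<in> I \<Longrightarrow> \<bar>A i\<bar> \<le> a" "\<And>i. i \<in> I \<Longrightarrow> \<bar>B i\<bar> \<le> b" "0 \<le> a" "0 \<le> b"
  shows "\<bar>(\<Prod>i\<in>I. A i + B i) - (\<Prod>i\<in>I. A i)\<bar> \<le> (a + b) ^ card I - a ^ card I"
  using assms(1-3)
proof (induction I rule: finite_induct)
  case empty then show ?case by simp
next
  case (insert j I)
  define P where "P = (\<Prod>i\<in>I. A i + B i)"
  define P' where "P' = (\<Prod>i\<in>I. A i)"
  have ih: "\<bar>P - P'\<bar> \<le> (a + b) ^ card I - a ^ card I" unfolding P_def P'_def using insert by auto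
  have "\<bar>P'\<bar> = (\<Prod>i\<in>I. \<bar>A i\<bar>)" unfolding P'_def by (rule abs_prod)
  also have "\<dots> \<le> (\<Prod>i\<in>I. a)" using insert by (intro prod_mono) auto
  finally have P': "\<bar>P'\<bar> \<le> a ^ card I" by simp
  have Aj: "\<bar>A j\<bar> \<le> a" and Bj: "\<bar>B j\<bar> \<le> b" using insert by auto
  have ABj: "\<bar>A j + B j\<bar> \<le> a + b" using Aj Bj abs_triangle_ineq[of "A j" "B j"] by linarith
  have "(\<Prod>i\<in>insert j I. A i + B i) - (\<Prod>i\<in>insert j I. A i) = (A j + B j) * P - A j * P'"
    using insert unfolding P_def P'_def by simp
  also have "\<dots> = (A j + B j) * (P - P') + B j * P'" by (rule prod_diff_alg)
  finally have eq: "(\<Prod>i\<in>insert j I. A i + B i) - (\<Prod>i\<in>insert j I. A i) = (A j + B j) * (P - P') + B j * P'" .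
  have "\<bar>(A j + B j) * (P - P') + B j * P'\<bar> \<le> \<bar>A j + B j\<bar> * \<bar>P - P'\<bar> + \<bar>B j\<bar> * \<bar>P'\<bar>"
    by (metis abs_mult abs_triangle_ineq)
  also have "\<dots> \<le> (a + b) * ((a + b) ^ card I - a ^ card I) + b * a ^ card I"
    using ABj Bj ih P' by (intro add_mono mult_mono) auto
  also have "\<dots> = (a + b) ^ card (insert j I) - a ^ card (insert j I)"
    using insert by (simp only: prod_diff_alg2 card.insert_remove) simp
  finally show ?case unfolding eq .
qed

lemma binom_diff:
  fixes a b :: real
  assumes "D \<ge> 1"
  shows "(a + b) ^ D - a ^ D = (\<Sum>k=0..D - 1. real (D choose k) * a ^ k * b ^ (D - k))"
proof -
  obtain m where m: "D = Suc m" using assms by (cases D) auto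
  have "(a + b) ^ D = (\<Sum>k\<le>D. real (D choose k) * a ^ k * b ^ (D - k))"
    by (rule binomial_ring)
  also have "\<dots> = (\<Sum>k\<le>m. real (D choose k) * a ^ k * b ^ (D - k)) + a ^ D"
    unfolding m by (simp add: sum.atMost_Suc)
  finally show ?thesis using m by (simp add: atLeast0AtMost)
qed



lemma term_eq:
  fixes \<beta> :: "'n::finite \<Rightarrow> nat" and v w :: "real^'n"
  shows "(-1) ^ mabs \<beta> / real (mfact \<beta>) * mhermite \<beta> v * mpow w \<beta>
     = (\<Prod>d\<in>UNIV. gg (\<beta> d) (v$d) * (w$d)^(\<beta> d) / fact (\<beta> d))"
proof -
  have 1: "(-1::real) ^ mabs \<beta> = (\<Prod>d\<in>UNIV. (-1) ^ (\<beta> d))"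
    unfolding mabs_def by (rule power_sum)
  have 2: "real (mfact \<beta>) = (\<Prod>d\<in>UNIV. fact (\<beta> d))"
    unfolding mfact_def by simp
  have 3: "mhermite \<beta> v = (\<Prod>d\<in>UNIV. (-1) ^ (\<beta> d) * gg (\<beta> d) (v$d))"
    unfolding mhermite_def by (simp add: hermite_fun_gg)
  have "(\<Prod>d\<in>UNIV. (-1::real) ^ (\<beta> d)) * (\<Prod>d\<in>UNIV. (-1) ^ (\<beta> d))
      = (\<Prod>d\<in>UNIV. (-1) ^ (\<beta> d) * (-1) ^ (\<beta> d))" by (rule prod.distrib[symmetric])
  also have "\<dots> = 1" by (simp add: power_mult_distrib[symmetric])
  finally have pm: "(\<Prod>d\<in>UNIV. (-1::real) ^ (\<beta> d)) * (\<Prod>d\<in>UNIV. (-1) ^ (\<beta> d)) = 1" .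
  have "(-1) ^ mabs \<beta> / real (mfact \<beta>) * mhermite \<beta> v * mpow w \<beta>
     = (\<Prod>d\<in>UNIV. (-1) ^ (\<beta> d) / fact (\<beta> d) * ((-1) ^ (\<beta> d) * gg (\<beta> d) (v$d)) * (w$d)^(\<beta> d))"
    unfolding 1 2 3 mpow_def by (simp add: prod.distrib prod_dividef pm)
  also have "\<dots> = (\<Prod>d\<in>UNIV. gg (\<beta> d) (v$d) * (w$d)^(\<beta> d) / fact (\<beta> d))"
  proof (rule prod.cong[OF refl])
    fix d
    have m: "(-1::real) ^ (\<beta> d) * (-1) ^ (\<beta> d) = 1"
      by (simp add: power_mult_distrib[symmetric])
    show "(-1) ^ (\<beta> d) / fact (\<beta> d) * ((-1) ^ (\<beta> d) * gg (\<beta> d) (v$d)) * (w$d)^(\<beta> d)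
        = gg (\<beta> d) (v$d) * (w$d)^(\<beta> d) / fact (\<beta> d)"
      using m by (simp add: field_simps)
  qed
  finally show ?thesis .
qed

lemma sum_prod_below:
  fixes f :: "'n::finite \<Rightarrow> nat \<Rightarrow> real"
  shows "(\<Sum>\<beta>\<in>mindices_below p. \<Prod>d\<in>UNIV. f d (\<beta> d)) = (\<Prod>d\<in>UNIV. \<Sum>n<p. f d n)"
proof -
  have e: "mindices_below p = PiE UNIV (\<lambda>_. {..<p})"
    unfolding mindices_below_def PiE_UNIV_domain Pi_def by auto
  show ?thesis unfolding e by (rule prod_sum_PiE[symmetric]) auto
qed



theorem mainTheorem1:
  fixes Q R :: "(real^'n) set" and cQ :: "real^'n" and h r0 :: real and p :: nat
  assumes "p \<ge> 1" and "h > 0" and "finite Q" and "finite R"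
    and "0 \<le> r0" and "r0 < 1"
    and "\<forall>q\<in>Q. \<forall>d. \<bar>q $ d - cQ $ d\<bar> < r0 * h"
  shows "\<forall>q\<in>Q. \<bar>G_approx p h cQ R q - G_exact h R q\<bar>
     \<le> real (card R) / (1 - r0) ^ CARD('n) *
        (\<Sum>k=0..CARD('n) - 1. real (CARD('n) choose k) * (1 - r0 ^ p) ^ k *
            (r0 ^ p / sqrt (fact p)) ^ (CARD('n) - k))"
proof
  fix q assume qQ: "q \<in> Q"
  define c where "c = 1 / sqrt (2 * h\<^sup>2)"
  define D where "D = CARD('n)"
  have hpos: "h > 0" by fact
  have c2: "c\<^sup>2 = 1 / (2 * h\<^sup>2)" unfolding c_def by (simp add: power_divide)
  define t where "t r d = c * (cQ$d - r$d)" for r :: "real^'n" and d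
  define s where "s d = c * (q$d - cQ$d)" for d
  have sb: "2 * (s d)\<^sup>2 \<le> r0\<^sup>2" for d
  proof -
    have l: "\<bar>q $ d - cQ $ d\<bar> < r0 * h" using assms(7) qQ by blast
    have "0 \<le> r0 * h" using hpos assms(5) by simp
    then have "\<bar>q $ d - cQ $ d\<bar> \<le> \<bar>r0 * h\<bar>" using l abs_of_nonneg[of "r0 * h"] by linarith
    then have "(q $ d - cQ $ d)\<^sup>2 \<le> (r0 * h)\<^sup>2" by (simp only: abs_le_square_iff)
    then have "(q $ d - cQ $ d)\<^sup>2 / h\<^sup>2 \<le> r0\<^sup>2"
      using hpos by (simp add: divide_le_eq power_mult_distrib)
    moreover have "2 * (s d)\<^sup>2 = (q $ d - cQ $ d)\<^sup>2 / h\<^sup>2"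
      unfolding s_def power_mult_distrib c2 using hpos by (simp add: field_simps)
    ultimately show ?thesis by simp
  qed
  define A where "A r d = (\<Sum>n<p. gg n (t r d) * (s d) ^ n / fact n)" for r d
  define F where "F r d = exp (- (t r d + s d)\<^sup>2)" for r d
  have approx: "G_approx p h cQ R q = (\<Sum>r\<in>R. \<Prod>d\<in>UNIV. A r d)"
  proof -
    have "G_approx p h cQ R q = (\<Sum>\<beta>\<in>mindices_below p. \<Sum>r\<in>R.
        (-1) ^ mabs \<beta> / real (mfact \<beta>) * mhermite \<beta> (c *\<^sub>R (cQ - r)) * mpow (c *\<^sub>R (q - cQ)) \<beta>)"
      unfolding G_approx_def local_moment_def c_def[symmetric] by (simp add: sum_distrib_right)
    also have "\<dots> = (\<Sum>r\<in>R. \<Sum>\<beta>\<in>mindices_below p.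
        (-1) ^ mabs \<beta> / real (mfact \<beta>) * mhermite \<beta> (c *\<^sub>R (cQ - r)) * mpow (c *\<^sub>R (q - cQ)) \<beta>)"
      by (rule sum.swap)
    also have "\<dots> = (\<Sum>r\<in>R. \<Sum>\<beta>\<in>mindices_below p. \<Prod>d\<in>UNIV. gg (\<beta> d) (t r d) * (s d) ^ (\<beta> d) / fact (\<beta> d))"
      unfolding term_eq t_def s_def by simp
    also have "\<dots> = (\<Sum>r\<in>R. \<Prod>d\<in>UNIV. A r d)"
      unfolding A_def
    proof (rule sum.cong[OF refl])
      fix r
      show "(\<Sum>\<beta>\<in>mindices_below p. \<Prod>d\<in>UNIV. gg (\<beta> d) (t r d) * s d ^ \<beta> d / fact (\<beta> d)) =
         (\<Prod>d\<in>UNIV. \<Sum>n<p. gg n (t r d) * s d ^ n / fact n)"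
        by (rule sum_prod_below[of "\<lambda>d n. gg n (t r d) * s d ^ n / fact n"])
    qed
    finally show ?thesis .
  qed
  have exact: "G_exact h R q = (\<Sum>r\<in>R. \<Prod>d\<in>UNIV. F r d)"
    unfolding G_exact_def
  proof (rule sum.cong[OF refl])
    fix r
    have "(norm (q - r))\<^sup>2 = (\<Sum>d\<in>UNIV. (q$d - r$d)\<^sup>2)"
      unfolding power2_norm_eq_inner inner_vec_def by (simp add: power2_eq_square)
    then have "- (norm (q - r))\<^sup>2 / (2 * h\<^sup>2) = (\<Sum>d\<in>UNIV. - (t r d + s d)\<^sup>2)"
    proof -
      assume n: "(norm (q - r))\<^sup>2 = (\<Sum>d\<in>UNIV. (q$d - r$d)\<^sup>2)"
      have "(t r d + s d)\<^sup>2 = (q$d - r$d)\<^sup>2 / (2 * h\<^sup>2)" for d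
      proof -
        have "t r d + s d = c * (q$d - r$d)" unfolding t_def s_def by (simp add: algebra_simps)
        then show ?thesis by (simp add: power_mult_distrib c2)
      qed
      then show ?thesis unfolding n by (simp add: sum_negf sum_divide_distrib)
    qed
    then show "exp (- (norm (q - r))\<^sup>2 / (2 * h\<^sup>2)) = (\<Prod>d\<in>UNIV. F r d)"
      unfolding F_def by (simp add: exp_sum)
  qed
  define a where "a = (\<Sum>n<p. r0 ^ n)"
  define b where "b = r0 ^ p / sqrt (fact p) / (1 - r0)"
  have r1: "0 < 1 - r0" "1 - r0 \<le> 1" using assms(5,6) by auto
  have a_eq: "a = (1 - r0 ^ p) / (1 - r0)" unfolding a_def using assms(6) by (simp add: sum_gp_strict)
  have a0: "0 \<le> a" unfolding a_def using assms(5) by (simp add: sum_nonneg)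
  have b0: "0 \<le> b" unfolding b_def using assms(5) r1 by simp
  have Ab: "\<bar>A r d\<bar> \<le> a" for r d
    unfolding A_def a_def by (rule coord_bounds(1)[OF sb assms(5)])
  have Bb: "\<bar>F r d - A r d\<bar> \<le> b" for r d
  proof -
    have "\<bar>F r d - A r d\<bar> \<le> r0 ^ p / sqrt (fact p)"
      unfolding F_def A_def by (rule coord_bounds(2)[OF sb assms(5)])
    also have "\<dots> \<le> b" unfolding b_def using r1 assms(5)
      by (simp add: le_divide_eq mult_left_le)
    finally show ?thesis .
  qed
  have per_r: "\<bar>(\<Prod>d\<in>UNIV. F r d) - (\<Prod>d\<in>UNIV. A r d)\<bar> \<le> (a + b) ^ D - a ^ D" for r
  proof -
    have "\<bar>(\<Prod>d\<in>UNIV. A r d + (F r d - A r d)) - (\<Prod>d\<in>UNIV. A r d)\<bar> \<le> (a + b) ^ D - a ^ D"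
      unfolding D_def by (rule prod_diff_bound) (simp_all add: Ab Bb a0 b0)
    then show ?thesis by simp
  qed
  have "\<bar>G_approx p h cQ R q - G_exact h R q\<bar> = \<bar>\<Sum>r\<in>R. (\<Prod>d\<in>UNIV. F r d) - (\<Prod>d\<in>UNIV. A r d)\<bar>"
    unfolding approx exact sum_subtractf by (simp add: abs_minus_commute)
  also have "\<dots> \<le> (\<Sum>r\<in>R. \<bar>(\<Prod>d\<in>UNIV. F r d) - (\<Prod>d\<in>UNIV. A r d)\<bar>)" by (rule sum_abs)
  also have "\<dots> \<le> (\<Sum>r\<in>R. (a + b) ^ D - a ^ D)" by (rule sum_mono[OF per_r])
  also have "\<dots> = real (card R) * ((a + b) ^ D - a ^ D)" by simp
  also have "(a + b) ^ D - a ^ D = (\<Sum>k=0..D - 1. real (D choose k) * a ^ k * b ^ (D - k))"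
    by (rule binom_diff) (simp add: D_def)
  also have "\<dots> = (\<Sum>k=0..D - 1. real (D choose k) * (1 - r0 ^ p) ^ k *
            (r0 ^ p / sqrt (fact p)) ^ (D - k)) / (1 - r0) ^ D"
    unfolding sum_divide_distrib
  proof (rule sum.cong[OF refl])
    fix k assume k: "k \<in> {0..D - 1}"
    then have kD: "k + (D - k) = D" by (simp add: D_def)
    have "(1 - r0) ^ D = (1 - r0) ^ k * (1 - r0) ^ (D - k)"
      by (subst kD[symmetric], rule power_add)
    then show "real (D choose k) * a ^ k * b ^ (D - k) = real (D choose k) * (1 - r0 ^ p) ^ k *
            (r0 ^ p / sqrt (fact p)) ^ (D - k) / (1 - r0) ^ D"
      unfolding a_eq b_def by (simp add: power_divide power_mult_distrib)
  qed
  finally show "\<bar>G_approx p h cQ R q - G_exact h R q\<bar>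
     \<le> real (card R) / (1 - r0) ^ CARD('n) *
        (\<Sum>k=0..CARD('n) - 1. real (CARD('n) choose k) * (1 - r0 ^ p) ^ k *
            (r0 ^ p / sqrt (fact p)) ^ (CARD('n) - k))"
    unfolding D_def by simp
qed


end
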